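(* Assume $\lfloor (M_1+\dots+M_n)/p\rfloor=n-1$ (ample reduction), and let $c(z)=(c^l_j(z))_{l,j=1,\dots,n-1}$ be defined by $I^{[l]}(z)=\sum_{j=1}^{n-1}c^l_j(z)w_j$, where $w_j=M_j^{-1}e_j-M_{j+1}^{-1}e_{j+1}$. Then for any $i\ne j$ the polynomial $\det c(z)$ is divisible by $(z_i-z_j)^{M_i+M_j-p}$.
   Context: $p,q$ are primes, $n$ a positive integer with $p>n\ge2$, $p>q$; $m_1,\dots,m_n$ are positive integers $<q$; $M_i$ is the least positive integer with $M_i\equiv -m_iq^{-1}\pmod p$ (its residue in formulas over $\mathbb{F}_p$). $e_1,\dots,e_n$ is the standard basis of $\mathbb{F}_p^n$. With $\Phi_p(x,z)=\prod_i(x-z_i)^{M_i}$, $I^{[l]}(z)\in\mathbb{F}_p[z_1,\dots,z_n]^n$ is the coefficient of $x^{lp-1}$ in $(\Phi_p/(x-z_1),\dots,\Phi_p/(x-z_n))$; its coefficient vectors lie in $\{c:\sum_im_ic_i=0\}$, of which $w_1,\dots,w_{n-1}$ is a basis. (Under the hypothesis, $M_i+M_j-p>0$.) *)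

theory Defs
  imports "HOL-Library.Poly_Mapping" "HOL-Computational_Algebra.Polynomial"
    "HOL-Number_Theory.Cong"
    "Berlekamp_Zassenhaus.Finite_Field" "Jordan_Normal_Form.Determinant"
begin

(* Multivariate polynomials over the field F_p = 'p mod_ring (CARD('p) = p),
  in variables z_i (i :: nat): a monomial is an exponent vector nat =>0 nat. *)
type_synonym 'a mpoly = "(nat \<Rightarrow>\<^sub>0 nat) \<Rightarrow>\<^sub>0 'a"

definition mvar :: "nat \<Rightarrow> 'a::{zero,one} mpoly" where
  "mvar i = Poly_Mapping.single (Poly_Mapping.single i 1) 1"

definition mconst :: "'a::zero \<Rightarrow> 'a mpoly" where
  "mconst a = Poly_Mapping.single 0 a"

(* M_i: least positive integer with M_i = - m_i q^{-1} (mod p),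
  equivalently M_i q + m_i = 0 (mod p). *)
definition Mexp :: "nat \<Rightarrow> nat \<Rightarrow> nat \<Rightarrow> nat" where
  "Mexp p q mi = (LEAST M. 0 < M \<and> [M * q + mi = 0] (mod p))"

(* The l-th vector I^{[l]}(z), j-th component: coefficient of x^{lp-1} in
  Phi_p(x,z)/(x - z_j) = prod_i (x - z_i)^(M_i - delta_ij). *)
definition Ivec :: "nat \<Rightarrow> (nat \<Rightarrow> nat) \<Rightarrow> nat \<Rightarrow> nat \<Rightarrow> nat \<Rightarrow> 'a::comm_ring_1 mpoly" where
  "Ivec n M p l j = coeff (\<Prod>i\<in>{1..n}. [:- mvar i, 1:] ^ (M i - (if i = j then 1 else 0))) (l * p - 1)"

definition wvec :: "(nat \<Rightarrow> nat) \<Rightarrow> nat \<Rightarrow> nat \<Rightarrow> 'a::field" where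
  "wvec M j k = (if k = j then inverse (of_nat (M j))
                 else if k = j + 1 then - inverse (of_nat (M (j + 1))) else 0)"

end

theory Submission
  imports Defs
begin



lemma frob_gen:
  fixes x y :: "'b::comm_ring_1"
  assumes p: "prime p" and z: "(of_nat p :: 'b) = 0"
  shows "(x + y) ^ p = x ^ p + y ^ p"
proof -
  have p0: "p > 0" using p prime_gt_0_nat by blast
  have "(x + y) ^ p = (\<Sum>k\<le>p. of_nat (p choose k) * x ^ k * y ^ (p - k))"
    by (rule binomial_ring)
  also have "\<dots> = (\<Sum>k\<in>{0,p}. of_nat (p choose k) * x ^ k * y ^ (p - k))"
  proof (intro sum.mono_neutral_right ballI)
    fix k assume "k \<in> {..p} - {0, p}"
    hence k: "k > 0" "k < p" by auto
    have "p dvd (p choose k)" by (rule dvd_choose_prime) (use k p in auto)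
    then obtain r where "p choose k = p * r" by blast
    hence "of_nat (p choose k) = (0 :: 'b)" using z by simp
    thus "of_nat (p choose k) * x ^ k * y ^ (p - k) = 0" by simp
  qed auto
  finally show ?thesis using p0 by (simp add: add_ac)
qed

lemma pcompose_power': "pcompose (f ^ k) q = (pcompose f q) ^ k"
  for f q :: "'a::comm_semiring_1 poly"
  by (induct k) (simp_all add: pcompose_1 pcompose_mult)

lemma pcompose_monom': "monom c K \<circ>\<^sub>p q = smult c (q ^ K)"
  for q :: "'a::comm_semiring_1 poly"
  by (simp add: monom_altdef pcompose_smult pcompose_power' pcompose_pCons)



lemma mono_shift:
  fixes a :: "'b::comm_ring_1"
  assumes p: "prime p" and z: "(of_nat p :: 'b) = 0" and l: "1 \<le> l"
  shows "coeff ([:-a,1:]^K) (l*p-1) =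
    (if K mod p = p-1 then of_nat (K div p choose (l-1)) * ((-a)^p)^(K div p + 1 - l) else 0)"
proof -
  define q where "q = [:-a,1:]"
  define b where "b = (-a)^p"
  define k1 where "k1 = K div p"
  define k0 where "k0 = K mod p"
  have p1: "p > 1" using p prime_gt_1_nat by blast
  have k0p: "k0 < p" unfolding k0_def using p1 by simp
  have zp: "(of_nat p :: 'b poly) = 0" by (simp add: of_nat_poly z)
  have qp: "q ^ p = monom 1 p + [:b:]"
  proof -
    have "q = monom 1 1 + [:-a:]" unfolding q_def by (simp add: monom_altdef)
    hence "q ^ p = (monom 1 1) ^ p + [:-a:] ^ p" using frob_gen[OF p zp] by simp
    thus ?thesis by (simp add: monom_power b_def flip: poly_const_pow)
  qed
  have bin: "(monom 1 p + [:b:]) ^ k1 = (\<Sum>s\<le>k1. monom (of_nat (k1 choose s) * b^(k1-s)) (p*s))"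
    apply (subst binomial_ring)
    apply (rule sum.cong, simp)
    apply (simp add: monom_power of_nat_poly poly_const_pow monom_altdef mult_ac)
    apply (metis power_mult mult.commute)
    done
  have K: "K = k0 + p * k1" unfolding k0_def k1_def by simp
  have "q ^ K = q ^ k0 * (q ^ p) ^ k1" by (simp add: K power_add power_mult)
  hence "coeff (q^K) (l*p-1) = coeff ((\<Sum>s\<le>k1. monom (of_nat (k1 choose s) * b^(k1-s)) (p*s)) * q^k0) (l*p-1)"
    by (simp add: qp bin mult.commute)
  also have "\<dots> = (\<Sum>s\<le>k1. if p*s \<le> l*p-1 then of_nat (k1 choose s) * b^(k1-s) * coeff (q^k0) (l*p-1-p*s) else 0)"
    by (simp only: sum_distrib_right coeff_sum coeff_monom_mult)
  also have "\<dots> = (\<Sum>s\<le>k1. if s = l - 1 then (if k0 = p-1 then of_nat (k1 choose s) * b^(k1-s) else 0) else 0)"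
  proof (rule sum.cong[OF refl])
    fix s assume "s \<in> {..k1}"
    have dq: "degree (q^k0) = k0" unfolding q_def by (rule degree_linear_power)
    show "(if p*s \<le> l*p-1 then of_nat (k1 choose s) * b^(k1-s) * coeff (q^k0) (l*p-1-p*s) else 0) =
      (if s = l - 1 then (if k0 = p-1 then of_nat (k1 choose s) * b^(k1-s) else 0) else 0)"
    proof (cases "p*s \<le> l*p-1")
      case False
      have "s \<noteq> l - 1"
      proof
        assume "s = l - 1"
        hence "l = s + 1" using l by simp
        hence "l*p = p*s + p" by (simp add: algebra_simps)
        thus False using False p1 by linarith
      qed
      then show ?thesis using False by simp
    next
      case True
      hence nlt: "\<not> l*p-1 < p*s" by simp
      have lp0: "0 < l*p" using l p1 by simp
      have sl: "s < l"
      proof (rule ccontr)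
        assume "\<not> s < l"
        hence "l*p \<le> s*p" by (intro mult_le_mono1) simp
        hence "l*p \<le> p*s" by (simp add: mult.commute)
        thus False using nlt lp0 by linarith
      qed
      show ?thesis
      proof (cases "s = l - 1")
        case sl1: True
        have "l = s + 1" using sl1 l by simp
        hence "l*p = p*s + p" by (simp add: algebra_simps)
        hence "l*p - 1 - p*s = p - 1" by linarith
        moreover have "coeff (q^k0) (p-1) = (if k0 = p-1 then 1 else 0)"
        proof (cases "k0 = p-1")
          case True thus ?thesis unfolding q_def by (simp add: coeff_linear_power)
        next
          case False hence "k0 < p - 1" using k0p by simp
          thus ?thesis using dq by (simp add: coeff_eq_0)
        qed
        ultimately show ?thesis using True \<open>s = l - 1\<close> by simp
      next
        case ne: False
        hence "s + 1 < l" using sl by simp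
        hence "(s+2)*p \<le> l*p" by (intro mult_le_mono1) simp
        hence "p*s + 2*p \<le> l*p" by (simp add: algebra_simps)
        hence "l*p-1-p*s > k0" using k0p p1 by linarith
        hence "coeff (q^k0) (l*p-1-p*s) = 0" using dq by (simp add: coeff_eq_0)
        thus ?thesis using ne True by simp
      qed
    qed
  qed
  also have "\<dots> = (if k0 = p-1 then of_nat (k1 choose (l-1)) * b^(k1+1-l) else 0)"
  proof -
    have "(\<Sum>s\<le>k1. if s = l - 1 then (if k0 = p-1 then of_nat (k1 choose s) * b^(k1-s) else 0) else (0::'b))
       = (if l - 1 \<in> {..k1} then (if k0 = p-1 then of_nat (k1 choose (l-1)) * b^(k1-(l-1)) else 0) else 0)"
      by (rule sum.delta) simp
    moreover have "k1-(l-1) = k1+1-l" using l by simp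
    ultimately show ?thesis by (cases "l - 1 \<le> k1") (auto simp: binomial_eq_0)
  qed
  finally show ?thesis unfolding q_def b_def k0_def k1_def .
qed



lemma sum_shift:
  fixes a :: "'b::comm_ring_1" and G :: "'b poly"
  assumes p: "prime p" and z: "(of_nat p :: 'b) = 0" and l: "1 \<le> l"
    and dG: "degree G < N * p"
  shows "coeff (G \<circ>\<^sub>p [:-a,1:]) (l*p-1) =
    (\<Sum>r\<in>{1..N}. coeff G (r*p-1) * (of_nat ((r-1) choose (l-1)) * ((-a)^p)^(r-l)))"
proof -
  have p1: "p > 1" using p prime_gt_1_nat by blast
  define h where "h K = (if K mod p = p-1 then of_nat (K div p choose (l-1)) * ((-a)^p)^(K div p + 1 - l) else (0::'b))" for K
  have "{..<N*p} = {..N*p-1}" using dG by auto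
  hence "G = (\<Sum>K<N*p. monom (coeff G K) K)"
    using poly_as_sum_of_monoms'[of G "N*p - 1"] dG by simp
  hence "G \<circ>\<^sub>p [:-a,1:] = (\<Sum>K<N*p. monom (coeff G K) K) \<circ>\<^sub>p [:-a,1:]"
    by (rule arg_cong)
  also have "\<dots> = (\<Sum>K<N*p. smult (coeff G K) ([:-a,1:]^K))"
    by (simp only: pcompose_sum pcompose_monom')
  finally have "G \<circ>\<^sub>p [:-a,1:] = (\<Sum>K<N*p. smult (coeff G K) ([:-a,1:]^K))" .
  hence "coeff (G \<circ>\<^sub>p [:-a,1:]) (l*p-1) = (\<Sum>K<N*p. coeff G K * h K)"
    by (simp only: coeff_sum coeff_smult mono_shift[OF p z l] h_def)
  also have "\<dots> = (\<Sum>K\<in>(\<lambda>r. r*p-1) ` {1..N}. coeff G K * h K)"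
  proof (rule sum.mono_neutral_right)
    show "(\<lambda>r. r*p-1) ` {1..N} \<subseteq> {..<N*p}"
    proof
      fix x assume "x \<in> (\<lambda>r. r*p-1) ` {1..N}"
      then obtain r where r: "r \<in> {1..N}" "x = r*p-1" by auto
      hence "r*p \<le> N*p" "0 < r*p" using p1 by auto
      hence "x < N*p" using r(2) by linarith
      thus "x \<in> {..<N*p}" by simp
    qed
    show "\<forall>K\<in>{..<N*p} - (\<lambda>r. r*p-1) ` {1..N}. coeff G K * h K = 0"
    proof
      fix K assume K: "K \<in> {..<N*p} - (\<lambda>r. r*p-1) ` {1..N}"
      have "K mod p \<noteq> p - 1"
      proof
        assume m: "K mod p = p - 1"
        have "K = K div p * p + (p-1)" using m div_mult_mod_eq[of K p] by simp
        moreover have "(K div p + 1) * p = K div p * p + p" by simp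
        ultimately have "K = (K div p + 1) * p - 1" using p1 by linarith
        moreover have "K div p + 1 \<in> {1..N}" using K p1
          by (auto simp: less_mult_imp_div_less div_less_iff_less_mult Suc_le_eq)
        ultimately show False using K by blast
      qed
      thus "coeff G K * h K = 0" by (simp add: h_def)
    qed
  qed auto
  also have "\<dots> = (\<Sum>r\<in>{1..N}. coeff G (r*p-1) * h (r*p-1))"
  proof -
    have inj: "inj_on (\<lambda>r. r*p-1) {1..N}"
    proof (rule inj_onI)
      fix x y assume xy: "x \<in> {1..N}" "y \<in> {1..N}" "x*p-1 = y*p-1"
      have xp: "0 < x*p" and yp: "0 < y*p" using xy p1 by auto
      have "x*p = Suc (x*p - 1)" using xp by simp
      also have "\<dots> = Suc (y*p - 1)" using xy(3) by simp
      also have "\<dots> = y*p" using yp by simp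
      finally have "x*p = y*p" .
      thus "x = y" using p1 by simp
    qed
    show ?thesis by (subst sum.reindex[OF inj]) (simp add: comp_def)
  qed
  also have "\<dots> = (\<Sum>r\<in>{1..N}. coeff G (r*p-1) * (of_nat ((r-1) choose (l-1)) * ((-a)^p)^(r-l)))"
  proof (rule sum.cong[OF refl])
    fix r assume r: "r \<in> {1..N}"
    have e: "r*p-1 = (r-1)*p + (p-1)" using r p1 by (cases r) (auto simp: algebra_simps)
    have v: "p - 1 < p" using p1 by simp
    have pnz: "p \<noteq> 0" using p1 by simp
    have "(r*p-1) mod p = p-1" unfolding e mod_mult_self3 using v by (rule mod_less)
    moreover have "(r*p-1) div p = r-1" unfolding e div_mult_self3[OF pnz] div_less[OF v] by simp
    ultimately show "coeff G (r*p-1) * h (r*p-1) = coeff G (r*p-1) * (of_nat ((r-1) choose (l-1)) * ((-a)^p)^(r-l))"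
      using r by (simp add: h_def)
  qed
  finally show ?thesis .
qed



lemma lin_dvd:
  fixes t :: "'b::comm_ring_1"
  shows "t ^ (A + B - u) dvd coeff ([:0,1:]^A * [:-t,1:]^B) u"
proof (induct B arbitrary: u)
  case 0
  have "[:0,1:]^A = (monom 1 A :: 'b poly)" by (simp add: monom_altdef)
  then show ?case by simp
next
  case (Suc B)
  have "[:0,1:]^A * [:-t,1:]^Suc B = [:-t,1:] * ([:0,1:]^A * [:-t,1:]^B)"
    by (simp only: power_Suc mult_ac)
  also have "\<dots> = smult (-t) ([:0,1:]^A * [:-t,1:]^B) + pCons 0 ([:0,1:]^A * [:-t,1:]^B)"
    by (simp only: mult_pCons_left) simp
  finally have eq: "[:0,1:]^A * [:-t,1:]^Suc B = smult (-t) ([:0,1:]^A * [:-t,1:]^B) + pCons 0 ([:0,1:]^A * [:-t,1:]^B)" .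
  have d1: "t ^ (A + Suc B - u) dvd (-t) * coeff ([:0,1:]^A * [:-t,1:]^B) u"
  proof -
    have "t ^ (A + Suc B - u) dvd t ^ Suc (A + B - u)"
      by (rule le_imp_power_dvd) simp
    hence "t ^ (A + Suc B - u) dvd t * t ^ (A + B - u)" by simp
    moreover have "t * t ^ (A + B - u) dvd t * coeff ([:0,1:]^A * [:-t,1:]^B) u"
      using Suc[of u] by (rule mult_dvd_mono[OF dvd_refl])
    ultimately have "t ^ (A + Suc B - u) dvd t * coeff ([:0,1:]^A * [:-t,1:]^B) u"
      by (rule dvd_trans)
    thus ?thesis by simp
  qed
  have d2: "t ^ (A + Suc B - u) dvd coeff (pCons 0 ([:0,1:]^A * [:-t,1:]^B)) u"
  proof (cases u)
    case 0 then show ?thesis by simp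
  next
    case (Suc v) then show ?thesis using Suc.hyps[of v] by simp
  qed
  show ?case unfolding eq using d1 d2 by (simp add: dvd_add)
qed

lemma lin_dvd_mult:
  fixes t :: "'b::comm_ring_1"
  assumes "e + u \<le> A + B"
  shows "t ^ e dvd coeff ([:0,1:]^A * [:-t,1:]^B * H) u"
proof -
  have "coeff ([:0,1:]^A * [:-t,1:]^B * H) u = (\<Sum>v\<le>u. coeff ([:0,1:]^A * [:-t,1:]^B) v * coeff H (u - v))"
    by (rule coeff_mult)
  moreover have "t ^ e dvd coeff ([:0,1:]^A * [:-t,1:]^B) v * coeff H (u - v)" if "v \<le> u" for v
  proof -
    have "t ^ e dvd t ^ (A + B - v)" using assms that by (intro le_imp_power_dvd) simp
    thus ?thesis using lin_dvd[of t A B v] by (meson dvd_trans dvd_mult2)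
  qed
  ultimately show ?thesis by (auto intro!: dvd_sum)
qed




lemma Mexp_props:
  assumes p: "prime p" and q: "prime q" and qp: "q < p" and m0: "0 < mi" and mq: "mi < q"
  shows "0 < Mexp p q mi \<and> \<not> p dvd Mexp p q mi"
proof -
  have p1: "1 < p" using p prime_gt_1_nat by blast
  have cop: "coprime q p" using primes_coprime[OF q p] qp by simp
  obtain x where x: "[q * x = 1] (mod p)" using cong_solve_coprime_nat[OF cop] by auto
  have x0: "x > 0"
  proof (rule ccontr)
    assume "\<not> x > 0"
    hence "[0 = 1] (mod p)" using x by simp
    thus False using p1 by (simp add: cong_def)
  qed
  define M0 where "M0 = x * (p - mi)"
  have "[q * x * (p - mi) + mi = 1 * (p - mi) + mi] (mod p)"
    by (intro cong_add cong_mult x cong_refl)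
  moreover have "1 * (p - mi) + mi = p" using mq qp by simp
  ultimately have "[M0 * q + mi = 0] (mod p)" unfolding M0_def
    by (simp add: mult_ac cong_def)
  moreover have "0 < M0" unfolding M0_def using x0 mq qp by simp
  ultimately have ex: "\<exists>M. 0 < M \<and> [M * q + mi = 0] (mod p)" by blast
  have L: "0 < Mexp p q mi \<and> [Mexp p q mi * q + mi = 0] (mod p)"
    unfolding Mexp_def by (rule LeastI_ex[OF ex])
  have "\<not> p dvd Mexp p q mi"
  proof
    assume "p dvd Mexp p q mi"
    hence d1: "p dvd Mexp p q mi * q" by simp
    have "p dvd Mexp p q mi * q + mi" using L by (simp add: cong_0_iff)
    hence "p dvd mi" using d1 by (simp add: dvd_add_right_iff)
    thus False using m0 mq qp by (auto dest: dvd_imp_le)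
  qed
  thus ?thesis using L by simp
qed

theorem lemma7p6:
  fixes n q :: nat and m :: "nat \<Rightarrow> nat"
    and c :: "nat \<Rightarrow> nat \<Rightarrow> ('p::prime_card) mod_ring mpoly"
  defines "p \<equiv> CARD('p)"
  defines "M \<equiv> (\<lambda>i. Mexp p q (m i))"
  assumes "prime q" and "2 \<le> n" and "n < p" and "q < p"
    and "\<And>i. i \<in> {1..n} \<Longrightarrow> 0 < m i \<and> m i < q"
    and ample: "(\<Sum>i\<in>{1..n}. M i) div p = n - 1"
    and c_def: "\<And>l k. l \<in> {1..n-1} \<Longrightarrow> k \<in> {1..n} \<Longrightarrow>
        (Ivec n M p l k :: 'p mod_ring mpoly) =
        (\<Sum>j\<in>{1..n-1}. c l j * mconst (wvec M j k))"
    and "i \<in> {1..n}" and "j \<in> {1..n}" and "i \<noteq> j"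
  shows "(mvar i - mvar j) ^ (M i + M j - p) dvd
           det (mat (n - 1) (n - 1) (\<lambda>(l, j). c (l + 1) (j + 1)))"
proof (cases "M i + M j - p = 0")
  case True
  then show ?thesis by simp
next
  case False
  hence eP: "p < M i + M j" by simp
  have pp: "prime p" unfolding p_def by (rule prime_card)
  have p1: "1 < p" using pp prime_gt_1_nat by blast
  have Mp: "0 < M k \<and> \<not> p dvd M k" if "k \<in> {1..n}" for k
    unfolding M_def using Mexp_props[OF pp \<open>prime q\<close> \<open>q < p\<close>]
      \<open>\<And>i. i \<in> {1..n} \<Longrightarrow> 0 < m i \<and> m i < q\<close>[OF that] by blast
  have Mnz: "(of_nat (M k) :: 'p mod_ring) \<noteq> 0" if "k \<in> {1..n}" for k
    using Mp[OF that] by (simp add: of_nat_eq_0_iff_char_dvd p_def)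
  have zR: "(of_nat p :: 'p mod_ring mpoly) = 0"
  proof -
    have "(of_nat p :: 'p mod_ring) = 0" by (simp add: p_def)
    hence "(Poly_Mapping.single 0 (of_nat p :: 'p mod_ring) :: 'p mod_ring mpoly) = 0" by simp
    thus ?thesis by (simp only: single_of_nat)
  qed
  define F where "F = (\<lambda>k. \<Prod>m\<in>{1..n}. [:- mvar m, 1:] ^ (M m - (if m = k then 1 else 0)) :: 'p mod_ring mpoly poly)"
  have Iv: "Ivec n M p l k = coeff (F k) (l*p-1)" for l k by (simp add: Ivec_def F_def)
  define a where "a = (mvar j :: 'p mod_ring mpoly)"
  define G where "G = (\<lambda>k. F k \<circ>\<^sub>p [:a,1:])"
  have aa: "[:a,1:] \<circ>\<^sub>p [:-a,1:] = [:0,1:]" by (simp add: pcompose_pCons)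
  have FG: "F k = G k \<circ>\<^sub>p [:-a,1:]" for k
    by (simp add: G_def aa flip: pcompose_assoc)
  have Gprod: "G k = (\<Prod>m\<in>{1..n}. [:a - mvar m, 1:] ^ (M m - (if m = k then 1 else 0)))" for k
    by (simp add: G_def F_def pcompose_prod pcompose_power' pcompose_pCons)
  define S where "S = (\<Sum>m\<in>{1..n}. M m)"
  have SnP: "S < n * p"
  proof -
    have "S = S div p * p + S mod p" by simp
    moreover have "S mod p < p" using p1 by simp
    moreover have "(n - 1) * p + p = n * p" using \<open>2 \<le> n\<close> by (cases n) simp_all
    moreover have "S div p * p = (n - 1) * p" using ample by (simp add: S_def)
    ultimately show ?thesis by linarith
  qed
  have Sk: "(\<Sum>m\<in>{1..n}. M m - (if m = k then 1 else 0)) + 1 = S" if k: "k \<in> {1..n}" for k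
  proof -
    have "(\<Sum>m\<in>{1..n}. M m - (if m = k then 1 else 0)) + (\<Sum>m\<in>{1..n}. (if m = k then 1 else 0))
        = (\<Sum>m\<in>{1..n}. M m)"
      unfolding sum.distrib[symmetric] by (rule sum.cong) (use Mp in auto)
    moreover have "(\<Sum>m\<in>{1..n}. (if m = k then 1 else 0::nat)) = 1" using k by simp
    ultimately show ?thesis by (simp add: S_def)
  qed
  have degG: "degree (G k) < n * p - 1" if k: "k \<in> {1..n}" for k
  proof -
    have "degree (G k) \<le> degree (F k) * degree [:a,1:]"
      unfolding G_def by (rule degree_pcompose_le)
    hence "degree (G k) \<le> degree (F k)" by simp
    also have "degree (F k) \<le> (\<Sum>m\<in>{1..n}. degree ([:- mvar m, 1:] ^ (M m - (if m = k then 1 else 0)) :: 'p mod_ring mpoly poly))"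
      unfolding F_def using degree_prod_sum_le[of "{1..n}"] by (simp add: o_def)
    also have "\<dots> = (\<Sum>m\<in>{1..n}. M m - (if m = k then 1 else 0))"
      by (simp add: degree_linear_power)
    finally show ?thesis using Sk[OF k] SnP by linarith
  qed
  define T where "T = (\<lambda>l r. of_nat ((r-1) choose (l-1)) * ((-a)^p)^(r-l) :: 'p mod_ring mpoly)"
  define J where "J = (\<lambda>r k. coeff (G k) (r*p-1))"
  have IJ: "Ivec n M p l k = (\<Sum>r\<in>{1..n-1}. J r k * T l r)" if l: "1 \<le> l" and k: "k \<in> {1..n}" for l k
  proof -
    have "Ivec n M p l k = (\<Sum>r\<in>{1..n}. J r k * T l r)"
      unfolding Iv FG J_def T_def
      by (rule sum_shift[OF pp zR l]) (use degG[OF k] in linarith)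
    also have "{1..n} = insert n {1..n-1}" using \<open>2 \<le> n\<close> by auto
    also have "(\<Sum>r\<in>insert n {1..n-1}. J r k * T l r) = J n k * T l n + (\<Sum>r\<in>{1..n-1}. J r k * T l r)"
      by (rule sum.insert) auto
    also have "J n k = 0" unfolding J_def using degG[OF k] by (simp add: coeff_eq_0)
    finally show ?thesis by simp
  qed
  have step: "mconst (of_nat (M k)) * Ivec n M p l k = c l k - (if k = 1 then 0 else c l (k-1))"
    if l: "l \<in> {1..n-1}" and k: "k \<in> {1..n-1}" for l k
  proof -
    define w where "w = mconst (inverse (of_nat (M k)) :: 'p mod_ring)"
    have kn: "k \<in> {1..n}" using k by auto
    have "mconst (of_nat (M k)) * w = mconst (of_nat (M k) * inverse (of_nat (M k)))"
      by (simp only: w_def mconst_def mult_single add_0)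
    also have "\<dots> = 1" using Mnz[OF kn] by (simp add: mconst_def)
    finally have mw: "mconst (of_nat (M k)) * w = 1" .
    have "Ivec n M p l k = (\<Sum>j'\<in>{1..n-1}. c l j' * mconst (wvec M j' k))"
      using c_def[OF l kn] .
    also have "\<dots> = (\<Sum>j'\<in>{1..n-1}. (if j' = k then c l k * w else 0) - (if j' = k - 1 \<and> k \<noteq> 1 then c l (k-1) * w else 0))"
      by (rule sum.cong) (auto simp: wvec_def w_def mconst_def single_uminus)
    also have "\<dots> = c l k * w - (if k = 1 then 0 else c l (k-1) * w)"
      using k by (cases "k = 1") (auto simp: sum_subtractf sum.delta')
    finally have "Ivec n M p l k = c l k * w - (if k = 1 then 0 else c l (k-1) * w)" .
    hence "mconst (of_nat (M k)) * Ivec n M p l k = mconst (of_nat (M k)) * (c l k * w - (if k = 1 then 0 else c l (k-1) * w))"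
      by (rule arg_cong)
    also have "\<dots> = c l k * (mconst (of_nat (M k)) * w) - (if k = 1 then 0 else c l (k-1) * (mconst (of_nat (M k)) * w))"
      by (cases "k = 1") (simp_all add: algebra_simps)
    also have "\<dots> = c l k - (if k = 1 then 0 else c l (k-1))"
      by (simp only: mw mult_1_right)
    finally show ?thesis .
  qed
  have cform: "c l k' = (\<Sum>k\<in>{1..k'}. mconst (of_nat (M k)) * Ivec n M p l k)"
    if l: "l \<in> {1..n-1}" and k': "k' \<in> {1..n-1}" for l k'
    using k'
  proof (induct k')
    case 0 then show ?case by simp
  next
    case (Suc k)
    show ?case
    proof (cases "k = 0")
      case True
      then show ?thesis using step[OF l Suc.prems] by simp
    next
      case False
      have "c l (Suc k) = mconst (of_nat (M (Suc k))) * Ivec n M p l (Suc k) + c l k"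
        using step[OF l Suc.prems] False by simp
      also have "c l k = (\<Sum>k\<in>{1..k}. mconst (of_nat (M k)) * Ivec n M p l k)"
        using Suc.hyps Suc.prems False by simp
      finally show ?thesis by (simp add: add.commute)
    qed
  qed
  define D where "D = (\<lambda>r k'. \<Sum>k\<in>{1..k'}. mconst (of_nat (M k)) * J r k)"
  have cTD: "c l k' = (\<Sum>r\<in>{1..n-1}. T l r * D r k')"
    if l: "l \<in> {1..n-1}" and k': "k' \<in> {1..n-1}" for l k'
  proof -
    have "c l k' = (\<Sum>k\<in>{1..k'}. mconst (of_nat (M k)) * (\<Sum>r\<in>{1..n-1}. J r k * T l r))"
      unfolding cform[OF l k'] using l k' by (intro sum.cong refl arg_cong2[where f="(*)"] IJ) auto
    also have "\<dots> = (\<Sum>k\<in>{1..k'}. \<Sum>r\<in>{1..n-1}. T l r * (mconst (of_nat (M k)) * J r k))"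
      by (simp add: sum_distrib_left mult_ac)
    also have "\<dots> = (\<Sum>r\<in>{1..n-1}. \<Sum>k\<in>{1..k'}. T l r * (mconst (of_nat (M k)) * J r k))"
      by (rule sum.swap)
    also have "\<dots> = (\<Sum>r\<in>{1..n-1}. T l r * D r k')"
      by (simp add: D_def sum_distrib_left)
    finally show ?thesis .
  qed
  define t where "t = (mvar i - mvar j :: 'p mod_ring mpoly)"
  define e where "e = M i + M j - p"
  have Jdvd: "t ^ e dvd J 1 k" if k: "k \<in> {1..n}" for k
  proof -
    define f where "f = (\<lambda>m. [:a - mvar m, 1:] ^ (M m - (if m = k then 1 else 0)))"
    have "G k = prod f {1..n}" unfolding Gprod f_def ..
    also have "prod f {1..n} = f j * prod f ({1..n} - {j})"
      by (rule prod.remove) (use \<open>j \<in> {1..n}\<close> in auto)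
    also have "prod f ({1..n} - {j}) = f i * prod f ({1..n} - {j} - {i})"
      by (rule prod.remove) (use \<open>i \<in> {1..n}\<close> \<open>i \<noteq> j\<close> in auto)
    also have "f j = [:0,1:] ^ (M j - (if j = k then 1 else 0))" by (simp add: f_def a_def)
    also have "f i = [:-t,1:] ^ (M i - (if i = k then 1 else 0))" by (simp add: f_def a_def t_def)
    finally have Gk: "G k = [:0,1:] ^ (M j - (if j = k then 1 else 0)) * [:-t,1:] ^ (M i - (if i = k then 1 else 0))
                  * (\<Prod>m\<in>{1..n} - {j} - {i}. f m)" by (simp add: mult.assoc)
    have "e + (p - 1) \<le> (M j - (if j = k then 1 else 0)) + (M i - (if i = k then 1 else 0))"
      using eP p1 Mp[OF \<open>i \<in> {1..n}\<close>] Mp[OF \<open>j \<in> {1..n}\<close>] \<open>i \<noteq> j\<close> unfolding e_def by auto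
    hence "t ^ e dvd coeff (G k) (p - 1)" unfolding Gk by (rule lin_dvd_mult)
    thus ?thesis by (simp add: J_def)
  qed
  have Ddvd: "t ^ e dvd D 1 k'" if "k' \<in> {1..n-1}" for k'
    unfolding D_def using that by (intro dvd_sum dvd_mult Jdvd) auto
  define Cm where "Cm = mat (n-1) (n-1) (\<lambda>(l, k). c (l + 1) (k + 1))"
  define Tm where "Tm = mat (n-1) (n-1) (\<lambda>(l, r). T (l+1) (r+1))"
  define Dm where "Dm = mat (n-1) (n-1) (\<lambda>(r, k). D (r+1) (k+1))"
  have CTD: "Cm = Tm * Dm"
  proof (rule eq_matI)
    fix l k assume l: "l < dim_row (Tm * Dm)" and k: "k < dim_col (Tm * Dm)"
    hence l': "l < n - 1" and k': "k < n - 1" by (simp_all add: Tm_def Dm_def)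
    have "Cm $$ (l, k) = c (l+1) (k+1)" using l' k' by (simp add: Cm_def)
    also have "\<dots> = (\<Sum>r\<in>{1..n-1}. T (l+1) r * D r (k+1))" using l' k' by (intro cTD) auto
    also have "\<dots> = (\<Sum>r<n-1. T (l+1) (Suc r) * D (Suc r) (k+1))"
      by (simp add: sum.atLeast1_atMost_eq)
    also have "\<dots> = (Tm * Dm) $$ (l, k)"
      using l' k' by (simp add: Tm_def Dm_def scalar_prod_def atLeast0LessThan)
    finally show "Cm $$ (l, k) = (Tm * Dm) $$ (l, k)" .
  qed (simp_all add: Cm_def Tm_def Dm_def)
  have Tc: "Tm \<in> carrier_mat (n-1) (n-1)" and Dc: "Dm \<in> carrier_mat (n-1) (n-1)"
    by (simp_all add: Tm_def Dm_def)
  have "det Dm = (\<Sum>k<n-1. Dm $$ (0,k) * cofactor Dm 0 k)"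
    by (rule laplace_expansion_row[OF Dc]) (use \<open>2 \<le> n\<close> in simp)
  moreover have "t ^ e dvd Dm $$ (0,k) * cofactor Dm 0 k" if "k < n - 1" for k
  proof -
    have "Dm $$ (0,k) = D 1 (k+1)" using that \<open>2 \<le> n\<close> by (simp add: Dm_def)
    moreover have "t ^ e dvd D 1 (k+1)" using that by (intro Ddvd) auto
    ultimately show ?thesis by simp
  qed
  ultimately have "t ^ e dvd det Dm" by (auto intro!: dvd_sum)
  hence "t ^ e dvd det Cm" unfolding CTD det_mult[OF Tc Dc] by simp
  thus ?thesis unfolding t_def e_def Cm_def .
qed


end
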